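(* For all $p, q, n \in \mathbb{N}$ with $p \le q$, $$u((p,q),n) \;=\; \sum_{i=0}^{n} \binom{p}{i}\binom{p+n-i}{p}\binom{q}{n-i}.$$
   Context: Let $\mathbb{N} = \{0,1,2,\dots\}$. For $(p,q) \in \mathbb{N}^2$ and $n \in \mathbb{N}$, an unrestricted generalized jump path of length $n$ starting at $(p,q)$ is a sequence $(x_0, \dots, x_n)$ of points of $\mathbb{N}^2$ satisfying three conditions: - $x_0 = (p,q)$; - for every $i$, each coordinate of $x_{i+1}$ is at most the corresponding coordinate of $x_i$; - $x_{i+1} \ne x_i$ for every $i$. Let $u((p,q),n)$ denote the number of such paths. Binomial coefficients satisfy $\binom{a}{b}=0$ if $b<0$ or $b>a$. *)

theory Defs
  imports Main
begin

definition ugj_path :: "nat \<times> nat \<Rightarrow> nat \<Rightarrow> (nat \<times> nat) list \<Rightarrow> bool" where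
  "ugj_path s n xs \<longleftrightarrow>
     length xs = Suc n \<and> xs ! 0 = s \<and>
     (\<forall>i<n. fst (xs ! Suc i) \<le> fst (xs ! i) \<and> snd (xs ! Suc i) \<le> snd (xs ! i)
            \<and> xs ! Suc i \<noteq> xs ! i)"

definition u :: "nat \<times> nat \<Rightarrow> nat \<Rightarrow> nat" where
  "u s n = card {xs. ugj_path s n xs}"

end

theory Submission imports Defs begin

lemma path_Suc:
  "ugj_path s (Suc n) xs \<longleftrightarrow> (\<exists>t ys. xs = s # ys \<and> fst t \<le> fst s \<and> snd t \<le> snd s \<and> t \<noteq> s \<and> ugj_path t n ys)"
proof
  assume h: "ugj_path s (Suc n) xs"
  then obtain ys where xs: "xs = s # ys" unfolding ugj_path_def
    by (cases xs) auto
  have l: "length ys = Suc n" using h xs by (simp add: ugj_path_def)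
  have c0: "fst (ys!0) \<le> fst s \<and> snd (ys!0) \<le> snd s \<and> ys!0 \<noteq> s"
    using h xs unfolding ugj_path_def by (metis nth_Cons_0 nth_Cons_Suc zero_less_Suc)
  have "\<forall>i<n. fst (ys ! Suc i) \<le> fst (ys ! i) \<and> snd (ys ! Suc i) \<le> snd (ys ! i) \<and> ys ! Suc i \<noteq> ys ! i"
  proof (intro allI impI)
    fix i assume "i < n"
    then have "Suc i < Suc n" by simp
    then show "fst (ys ! Suc i) \<le> fst (ys ! i) \<and> snd (ys ! Suc i) \<le> snd (ys ! i) \<and> ys ! Suc i \<noteq> ys ! i"
      using h xs unfolding ugj_path_def by (metis nth_Cons_Suc)
  qed
  then have "ugj_path (ys!0) n ys" using l unfolding ugj_path_def by simp
  then show "\<exists>t ys. xs = s # ys \<and> fst t \<le> fst s \<and> snd t \<le> snd s \<and> t \<noteq> s \<and> ugj_path t n ys"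
    using c0 xs by blast
next
  assume "\<exists>t ys. xs = s # ys \<and> fst t \<le> fst s \<and> snd t \<le> snd s \<and> t \<noteq> s \<and> ugj_path t n ys"
  then obtain t ys where h: "xs = s # ys" "fst t \<le> fst s" "snd t \<le> snd s" "t \<noteq> s" "ugj_path t n ys" by blast
  have "\<forall>i<Suc n. fst (xs ! Suc i) \<le> fst (xs ! i) \<and> snd (xs ! Suc i) \<le> snd (xs ! i) \<and> xs ! Suc i \<noteq> xs ! i"
  proof (intro allI impI)
    fix i assume i: "i < Suc n"
    show "fst (xs ! Suc i) \<le> fst (xs ! i) \<and> snd (xs ! Suc i) \<le> snd (xs ! i) \<and> xs ! Suc i \<noteq> xs ! i"
    proof (cases i)
      case 0 then show ?thesis using h unfolding ugj_path_def by auto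
    next
      case (Suc j) then show ?thesis using h i unfolding ugj_path_def by auto
    qed
  qed
  then show "ugj_path s (Suc n) xs" using h unfolding ugj_path_def by simp
qed

definition R :: "nat \<times> nat \<Rightarrow> (nat \<times> nat) set" where
  "R s = ({0..fst s} \<times> {0..snd s}) - {s}"

lemma set_Suc: "{xs. ugj_path s (Suc n) xs} = (\<Union>t\<in>R s. (\<lambda>ys. s # ys) ` {ys. ugj_path t n ys})"
  unfolding R_def path_Suc by (auto simp: mem_Times_iff) force+

lemma set_0: "{xs. ugj_path s 0 xs} = {[s]}"
  unfolding ugj_path_def by (auto simp: length_Suc_conv)

lemma finR: "finite (R s)" unfolding R_def by auto

lemma fin_paths: "finite {xs. ugj_path s n xs}"
proof (induction n arbitrary: s)
  case 0 then show ?case by (simp add: set_0)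
next
  case (Suc n) then show ?case by (simp add: set_Suc finR)
qed

lemma u0: "u s 0 = 1" by (simp add: u_def set_0)

lemma uSuc: "u s (Suc n) = (\<Sum>t\<in>R s. u t n)"
proof -
  have "u s (Suc n) = (\<Sum>t\<in>R s. card ((\<lambda>ys. s # ys) ` {ys. ugj_path t n ys}))"
    unfolding u_def set_Suc
  proof (rule card_UN_disjoint[OF finR])
    show "\<forall>i\<in>R s. finite ((#) s ` {ys. ugj_path i n ys})" using fin_paths by auto
    show "\<forall>i\<in>R s. \<forall>j\<in>R s. i \<noteq> j \<longrightarrow> (#) s ` {ys. ugj_path i n ys} \<inter> (#) s ` {ys. ugj_path j n ys} = {}"
      by (auto simp: ugj_path_def)
  qed
  also have "\<dots> = (\<Sum>t\<in>R s. u t n)"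
    by (rule sum.cong) (auto simp: u_def card_image)
  finally show ?thesis .
qed
definition F :: "nat \<Rightarrow> nat \<Rightarrow> nat \<Rightarrow> nat" where
  "F p q n = (\<Sum>k=0..n. (n choose k) * (q choose k) * ((p+k) choose n))"

lemma L1: "k \<le> n \<Longrightarrow> (\<Sum>a=0..p. (a+k) choose n) = Suc (p+k) choose Suc n"
proof (induction p)
  case 0
  then show ?case by (cases "k = n") (auto simp: binomial_eq_0)
next
  case (Suc p)
  then show ?case by simp
qed

lemma L2: "(\<Sum>b=0..q. b choose k) = Suc q choose Suc k"
  using sum_choose_upper[of k q] by (simp add: atLeast0AtMost)

lemma dd: "(\<Sum>a\<in>A. \<Sum>b\<in>B. c * f b * g a) = (c::nat) * (\<Sum>b\<in>B. f b) * (\<Sum>a\<in>A. g a)"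
  by (simp add: sum_distrib_left sum_distrib_right mult.assoc)

lemma L3: "(\<Sum>(a,b)\<in>{0..p}\<times>{0..q}. F a b n) =
   (\<Sum>k=0..n. (n choose k) * (Suc q choose Suc k) * (Suc (p+k) choose Suc n))"
proof -
  have "(\<Sum>(a,b)\<in>{0..p}\<times>{0..q}. F a b n) = (\<Sum>a=0..p. \<Sum>b=0..q. F a b n)"
    by (simp add: sum.cartesian_product)
  also have "\<dots> = (\<Sum>a=0..p. \<Sum>b=0..q. \<Sum>k=0..n. (n choose k) * (b choose k) * ((a+k) choose n))"
    by (simp add: F_def)
  also have "\<dots> = (\<Sum>a=0..p. \<Sum>k=0..n. \<Sum>b=0..q. (n choose k) * (b choose k) * ((a+k) choose n))"
    by (rule sum.cong[OF refl], rule sum.swap)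
  also have "\<dots> = (\<Sum>k=0..n. \<Sum>a=0..p. \<Sum>b=0..q. (n choose k) * (b choose k) * ((a+k) choose n))"
    by (rule sum.swap)
  also have "\<dots> = (\<Sum>k=0..n. (n choose k) * (\<Sum>b=0..q. b choose k) * (\<Sum>a=0..p. (a+k) choose n))"
    by (rule sum.cong[OF refl], rule dd)
  also have "\<dots> = (\<Sum>k=0..n. (n choose k) * (Suc q choose Suc k) * (Suc (p+k) choose Suc n))"
    by (rule sum.cong) (auto simp: L1 L2)
  finally show ?thesis .
qed

lemma pascal_sum: "(\<Sum>k=0..Suc n. (Suc n choose k) * g k) = (\<Sum>k=0..n. (n choose k) * g k) + (\<Sum>k=0..n. (n choose k) * g (Suc k))"
proof -
  have "(\<Sum>k=0..Suc n. (Suc n choose k) * g k) = g 0 + (\<Sum>k=0..n. (Suc n choose Suc k) * g (Suc k))"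
    by (subst sum.atLeast0_atMost_Suc_shift) simp
  also have "\<dots> = g 0 + (\<Sum>k=0..n. (n choose Suc k) * g (Suc k)) + (\<Sum>k=0..n. (n choose k) * g (Suc k))"
    by (simp add: sum.distrib algebra_simps)
  also have "g 0 + (\<Sum>k=0..n. (n choose Suc k) * g (Suc k)) = (\<Sum>k=0..Suc n. (n choose k) * g k)"
    by (subst sum.atLeast0_atMost_Suc_shift) simp
  also have "\<dots> = (\<Sum>k=0..n. (n choose k) * g k)"
    by simp
  finally show ?thesis .
qed

lemma L4: "(\<Sum>k=0..n. (n choose k) * (Suc q choose Suc k) * (Suc (p+k) choose Suc n)) = F p q (Suc n) + F p q n"
proof -
  have "F p q (Suc n) = (\<Sum>k=0..Suc n. (Suc n choose k) * ((q choose k) * ((p+k) choose Suc n)))"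
    by (simp add: F_def mult.assoc)
  also have "\<dots> = (\<Sum>k=0..n. (n choose k) * ((q choose k) * ((p+k) choose Suc n)))
      + (\<Sum>k=0..n. (n choose k) * ((q choose Suc k) * ((p+Suc k) choose Suc n)))"
    by (rule pascal_sum)
  finally have "F p q (Suc n) + F p q n = (\<Sum>k=0..n. (n choose k) * ((q choose k) * ((p+k) choose Suc n)))
      + (\<Sum>k=0..n. (n choose k) * ((q choose Suc k) * ((p+Suc k) choose Suc n))) + (\<Sum>k=0..n. (n choose k) * (q choose k) * ((p+k) choose n))"
    by (simp add: F_def)
  also have "\<dots> = (\<Sum>k=0..n. (n choose k) * (Suc q choose Suc k) * (Suc (p+k) choose Suc n))"
    by (simp add: sum.distrib[symmetric] algebra_simps)
  finally show ?thesis by simp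
qed

lemma target_eq_F: "(\<Sum>i=0..n. (p choose i) * ((p + n - i) choose p) * (q choose (n - i))) = F p q n"
proof -
  have "(\<Sum>i=0..n. (p choose i) * ((p + n - i) choose p) * (q choose (n - i)))
      = (\<Sum>i=0..n. (n choose i) * ((p + n - i) choose n) * (q choose (n - i)))"
  proof (rule sum.cong)
    fix i assume i: "i \<in> {0..n}"
    show "(p choose i) * ((p + n - i) choose p) * (q choose (n - i)) = (n choose i) * ((p + n - i) choose n) * (q choose (n - i))"
    proof (cases "i \<le> p")
      case True
      have a: "((p + n - i) choose p) * (p choose i) = ((p+n-i) choose i) * ((p+n-i-i) choose (p-i))"
        by (rule choose_mult) (use True i in auto)
      have b: "((p + n - i) choose n) * (n choose i) = ((p+n-i) choose i) * ((p+n-i-i) choose (n-i))"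
        by (rule choose_mult) (use True i in auto)
      have c: "(p+n-i-i) choose (p-i) = (p+n-i-i) choose (n-i)"
      proof -
        have "p+n-i-i - (p-i) = n-i" using True i by auto
        moreover have "p - i \<le> p+n-i-i" using True i by auto
        ultimately show ?thesis using binomial_symmetric[of "p-i" "p+n-i-i"] by metis
      qed
      show ?thesis using a b c by (simp add: mult_ac)
    next
      case False
      then have "p + n - i < n" using i by auto
      then show ?thesis using False by (simp add: binomial_eq_0)
    qed
  qed simp
  also have "\<dots> = (\<Sum>k=0..n. (n choose k) * (q choose k) * ((p+k) choose n))"
  proof -
    have "(\<Sum>i=0..n. (n choose i) * ((p + n - i) choose n) * (q choose (n - i)))
       = (\<Sum>k=0..n. (n choose (n + 0 - k)) * ((p + n - (n + 0 - k)) choose n) * (q choose (n - (n + 0 - k))))"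
      by (rule sum.atLeastAtMost_rev)
    also have "\<dots> = (\<Sum>k=0..n. (n choose k) * (q choose k) * ((p+k) choose n))"
    proof (rule sum.cong)
      fix k assume k: "k \<in> {0..n}"
      then have "n choose (n - k) = n choose k" using binomial_symmetric[of k n] by auto
      moreover have "p + n - (n - k) = p + k" "n - (n - k) = k" using k by auto
      ultimately show "(n choose (n + 0 - k)) * ((p + n - (n + 0 - k)) choose n) * (q choose (n - (n + 0 - k))) = (n choose k) * (q choose k) * ((p+k) choose n)"
        by simp
    qed simp
    finally show ?thesis .
  qed
  finally show ?thesis by (simp add: F_def)
qed

lemma uF: "u (p,q) n = F p q n"
proof (induction n arbitrary: p q)
  case 0
  then show ?case by (simp add: u0 F_def)
next
  case (Suc n)
  have fin: "finite ({0..p}\<times>{0..q})" by simp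
  have mem: "(p,q) \<in> {0..p}\<times>{0..q}" by simp
  have "u (p,q) (Suc n) = (\<Sum>t\<in>R (p,q). u t n)" by (rule uSuc)
  also have "\<dots> = (\<Sum>(a,b)\<in>R (p,q). F a b n)"
    by (rule sum.cong) (auto simp: Suc.IH)
  finally have 1: "u (p,q) (Suc n) = (\<Sum>(a,b)\<in>R (p,q). F a b n)" .
  have "(\<Sum>(a,b)\<in>{0..p}\<times>{0..q}. F a b n) = F p q n + (\<Sum>(a,b)\<in>R (p,q). F a b n)"
    unfolding R_def using sum.remove[OF fin mem, of "\<lambda>(a,b). F a b n"] by simp
  then show ?case using 1 L3 L4 by simp
qed

theorem mainTheorem10:
  fixes p q n :: nat
  assumes "p \<le> q"
  shows "u (p, q) n = (\<Sum>i=0..n. (p choose i) * ((p + n - i) choose p) * (q choose (n - i)))"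
  using uF target_eq_F by simp

end
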